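(* Let $N\ge1$, let $q\in(0,1)$, let $a_1,\ldots,a_N$ be nonzero real numbers which are either all positive or all negative, and let $\nu_1,\ldots,\nu_N$ be parameters. Let $f(w)$, $w\in\mathbb{C}$, be holomorphic and nonzero in a complex neighborhood of an interval of $\mathbb{R}$ containing $\{a_i,qa_i\}_{i=1}^N$, and set $G(a_1,\ldots,a_N):=f(a_1)\cdots f(a_N)$. Then $$\frac{\mathscr{D}_N G(a_1,\ldots,a_N)}{G(a_1,\ldots,a_N)}=-\frac{1}{2\pi i}\oint\Bigl(\prod_{i=1}^N\frac{a_i-\nu_iz}{a_i-z}\Bigr)\frac{f(qz)}{f(z)}\frac{dz}{z},$$ where the integration contour is positively oriented and encircles $a_1,\ldots,a_N$ but no other singularities of the integrand.
   Context: $\mathscr{T}_{q;x}$ denotes the $q$-shift operator $\mathscr{T}_{q;x}F(\ldots,x,\ldots)=F(\ldots,qx,\ldots)$. The operator $\mathscr{D}_N$ acts on functions of $a_1,\ldots,a_N,\nu_1,\ldots,\nu_N$ (and possibly further variables, which it does not affect) by $$\mathscr{D}_N=\sum_{r=1}^N(1-\nu_r)\Bigl(\prod_{1\le i\le N,\,i\ne r}\frac{a_i-\nu_ia_r}{a_i-a_r}\Bigr)\mathscr{T}_{q;a_r}\mathscr{T}_{q;\nu_r}.$$ *)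

theory Defs
  imports "HOL-Complex_Analysis.Complex_Analysis"
begin

definition qshift_a :: "complex \<Rightarrow> nat \<Rightarrow>
    ((nat \<Rightarrow> complex) \<Rightarrow> (nat \<Rightarrow> complex) \<Rightarrow> complex) \<Rightarrow>
    ((nat \<Rightarrow> complex) \<Rightarrow> (nat \<Rightarrow> complex) \<Rightarrow> complex)" where
  "qshift_a q r F = (\<lambda>a nu. F (a(r := q * a r)) nu)"

definition qshift_nu :: "complex \<Rightarrow> nat \<Rightarrow>
    ((nat \<Rightarrow> complex) \<Rightarrow> (nat \<Rightarrow> complex) \<Rightarrow> complex) \<Rightarrow>
    ((nat \<Rightarrow> complex) \<Rightarrow> (nat \<Rightarrow> complex) \<Rightarrow> complex)" where
  "qshift_nu q r F = (\<lambda>a nu. F a (nu(r := q * nu r)))"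

definition D_op :: "complex \<Rightarrow> nat \<Rightarrow>
    ((nat \<Rightarrow> complex) \<Rightarrow> (nat \<Rightarrow> complex) \<Rightarrow> complex) \<Rightarrow>
    ((nat \<Rightarrow> complex) \<Rightarrow> (nat \<Rightarrow> complex) \<Rightarrow> complex)" where
  "D_op q N F = (\<lambda>a nu. \<Sum>r\<in>{1..N}. (1 - nu r) *
      (\<Prod>i\<in>{1..N} - {r}. (a i - nu i * a r) / (a i - a r)) *
      qshift_a q r (qshift_nu q r F) a nu)"

definition Gprod :: "(complex \<Rightarrow> complex) \<Rightarrow> nat \<Rightarrow>
    (nat \<Rightarrow> complex) \<Rightarrow> (nat \<Rightarrow> complex) \<Rightarrow> complex" where
  "Gprod f N = (\<lambda>a nu. \<Prod>i\<in>{1..N}. f (a i))"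

end

theory Submission
  imports Defs "HOL-Computational_Algebra.Polynomial"
begin

lemma lagrange_one:
  fixes A :: "nat \<Rightarrow> complex"
  assumes fin: "finite I" and ne: "I \<noteq> {}" and inj: "inj_on A I"
  shows "(\<Sum>r\<in>I. (\<Prod>i\<in>I-{r}. (A i - z)) / (\<Prod>i\<in>I-{r}. (A i - A r))) = 1"
proof -
  define p where "p = (\<Sum>r\<in>I. smult (1 / (\<Prod>i\<in>I-{r}. (A i - A r))) (\<Prod>i\<in>I-{r}. [:A i, -1:]))"
  have pz: "poly p x = (\<Sum>r\<in>I. (\<Prod>i\<in>I-{r}. (A i - x)) / (\<Prod>i\<in>I-{r}. (A i - A r)))" for x
    unfolding p_def by (simp add: poly_sum poly_prod)
  have deg: "degree p \<le> card I - 1"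
    unfolding p_def
  proof (rule degree_sum_le[OF fin])
    fix r assume r: "r \<in> I"
    have "degree (\<Prod>i\<in>I-{r}. [:A i, -1:]) \<le> (\<Sum>i\<in>I-{r}. degree [:A i, -1:])"
      using degree_prod_sum_le[of "I-{r}" "\<lambda>i. [:A i, -1:]"] fin by (simp add: o_def)
    also have "\<dots> = card (I - {r})" by simp
    also have "\<dots> = card I - 1" using r fin by simp
    finally show "degree (smult (1 / (\<Prod>i\<in>I-{r}. (A i - A r))) (\<Prod>i\<in>I-{r}. [:A i, -1:])) \<le> card I - 1"
      by (meson degree_smult_le le_trans)
  qed
  have roots: "poly p x = poly 1 x" if xA: "x \<in> A ` I" for x
  proof -
    obtain j where j: "j \<in> I" "x = A j" using xA by blast
    have "poly p x = (\<Sum>r\<in>I. (\<Prod>i\<in>I-{r}. (A i - A j)) / (\<Prod>i\<in>I-{r}. (A i - A r)))"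
      using pz j by simp
    also have "\<dots> = (\<Prod>i\<in>I-{j}. (A i - A j)) / (\<Prod>i\<in>I-{j}. (A i - A j))"
    proof (rule sum.mono_neutral_right[OF fin, of "{j}", simplified])
      show "j \<in> I" by fact
      show "\<forall>r\<in>I - {j}. (\<Prod>i\<in>I - {r}. A i - A j) / (\<Prod>i\<in>I - {r}. A i - A r) = 0"
        using fin j by (auto intro!: prod_zero)
    qed
    also have "\<dots> = 1"
    proof -
      have "(\<Prod>i\<in>I-{j}. (A i - A j)) \<noteq> 0"
        using fin inj j by (auto simp: inj_on_def)
      then show ?thesis by simp
    qed
    finally show ?thesis by simp
  qed
  have cardA: "card (A ` I) = card I" using card_image[OF inj] .
  have "card I > 0" using fin ne by (simp add: card_gt_0_iff)
  have "p = 1"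
    by (rule poly_eqI_degree[OF roots]) (use deg cardA \<open>card I > 0\<close> in auto)
  then show ?thesis using pz[of z] by simp
qed

theorem lemma4p2:
  fixes N :: nat and q :: real and a :: "nat \<Rightarrow> real" and nu :: "nat \<Rightarrow> complex"
    and f :: "complex \<Rightarrow> complex" and U :: "complex set" and c d :: real
    and \<gamma> :: "real \<Rightarrow> complex"
  assumes N: "N \<ge> 1"
    and q: "0 < q" "q < 1"
    and sign: "(\<forall>i\<in>{1..N}. a i > 0) \<or> (\<forall>i\<in>{1..N}. a i < 0)"
    and distinct: "inj_on a {1..N}"
    and U_open: "open U"
    and interval: "\<forall>i\<in>{1..N}. a i \<in> {c..d} \<and> q * a i \<in> {c..d}"
    and interval_U: "complex_of_real ` {c..d} \<subseteq> U"
    and f_hol: "f holomorphic_on U"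
    and f_nz: "\<forall>w\<in>U. f w \<noteq> 0"
    and \<gamma>_path: "valid_path \<gamma>" "pathfinish \<gamma> = pathstart \<gamma>"
    and \<gamma>_img: "\<forall>z\<in>path_image \<gamma>. z \<in> U \<and> complex_of_real q * z \<in> U \<and> z \<noteq> 0
                    \<and> (\<forall>i\<in>{1..N}. z \<noteq> complex_of_real (a i))"
    and \<gamma>_encircles: "\<forall>i\<in>{1..N}. winding_number \<gamma> (complex_of_real (a i)) = 1"
    and \<gamma>_no_other: "\<forall>w. w \<notin> path_image \<gamma> \<and> winding_number \<gamma> w \<noteq> 0
                    \<and> (\<forall>i\<in>{1..N}. w \<noteq> complex_of_real (a i))
                    \<longrightarrow> w \<in> U \<and> complex_of_real q * w \<in> U \<and> w \<noteq> 0"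
  shows "D_op (complex_of_real q) N (Gprod f N) (\<lambda>i. complex_of_real (a i)) nu
           / Gprod f N (\<lambda>i. complex_of_real (a i)) nu
         = - (1 / (2 * complex_of_real pi * \<i>)) *
           contour_integral \<gamma>
             (\<lambda>z. (\<Prod>i\<in>{1..N}. (complex_of_real (a i) - nu i * z) / (complex_of_real (a i) - z))
                  * f (complex_of_real q * z) / f z / z)"
proof -
  define I where "I = {1..N}"
  define A where "A = (\<lambda>i. complex_of_real (a i))"
  define Q where "Q = complex_of_real q"
  define S where "S = (U \<inter> ((*) Q -` U)) - {0}"
  define F where "F = (\<lambda>w. f (Q * w) / f w / w)"
  define wt where "wt = (\<lambda>r. 1 / (\<Prod>i\<in>I-{r}. (A i - A r)))"
  define h where "h = (\<lambda>r w. wt r * (\<Prod>i\<in>I. (A i - nu i * w)) * F w)"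
  have fin: "finite I" and Ine: "I \<noteq> {}" using N unfolding I_def by auto
  have injA: "inj_on A I" using distinct unfolding inj_on_def A_def I_def by (simp only: of_real_eq_iff)
  have Sopen: "open S" unfolding S_def
    by (intro open_Diff open_Int U_open continuous_open_vimage) (auto intro!: continuous_intros)
  have AS: "A r \<in> S" if "r \<in> I" for r
  proof -
    have "a r \<in> {c..d}" "q * a r \<in> {c..d}" using interval that by (auto simp: I_def)
    then have "complex_of_real (a r) \<in> U" "complex_of_real (q * a r) \<in> U" using interval_U by blast+
    then have "A r \<in> U" "Q * A r \<in> U" unfolding A_def Q_def by (simp_all only: of_real_mult)
    moreover have "a r \<noteq> 0"
    proof -
      have rI: "r \<in> {1..N}" using that unfolding I_def .
      show ?thesis using sign rI by (metis less_irrefl)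
    qed
    ultimately show ?thesis by (auto simp: S_def A_def)
  qed
  have pathS: "path_image \<gamma> \<subseteq> S" using \<gamma>_img by (auto simp: S_def Q_def)
  have pathA: "z \<noteq> A r" if "z \<in> path_image \<gamma>" "r \<in> I" for z r
    using \<gamma>_img that by (auto simp: A_def I_def)
  have zero: "winding_number \<gamma> w = 0" if "w \<notin> S" for w
  proof (rule ccontr)
    assume nz: "winding_number \<gamma> w \<noteq> 0"
    have "w \<notin> path_image \<gamma>" using pathS that by auto
    moreover have "\<forall>i\<in>{1..N}. w \<noteq> complex_of_real (a i)" using AS that by (auto simp: A_def I_def)
    ultimately have "w \<in> S" using \<gamma>_no_other nz by (auto simp: S_def Q_def)
    then show False using that by simp
  qed
  have Fhol: "F holomorphic_on S"
  proof -
    have f1: "f holomorphic_on S" using f_hol by (rule holomorphic_on_subset) (auto simp: S_def)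
    have "f \<circ> (\<lambda>w. Q * w) holomorphic_on S"
      by (rule holomorphic_on_compose_gen[where t=U]) (auto intro!: holomorphic_intros f_hol simp: S_def)
    then have f2: "(\<lambda>w. f (Q * w)) holomorphic_on S" by (simp add: o_def)
    show ?thesis unfolding F_def
      by (intro holomorphic_intros f1 f2) (use f_nz in \<open>auto simp: S_def\<close>)
  qed
  have hhol: "h r holomorphic_on S" for r
    unfolding h_def by (intro holomorphic_intros Fhol)
  have cauchy: "((\<lambda>w. h r w / (w - A r)) has_contour_integral (2*pi*\<i> * h r (A r))) \<gamma>" if r: "r \<in> I" for r
  proof -
    have "((\<lambda>w. h r w / (w - A r)) has_contour_integral (2*pi * \<i> * winding_number \<gamma> (A r) * h r (A r))) \<gamma>"
      by (rule Cauchy_integral_formula_global[OF Sopen hhol AS[OF r] \<gamma>_path(1) _ \<gamma>_path(2) zero])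
         (use pathS pathA r in auto)
    moreover have "winding_number \<gamma> (A r) = 1" using \<gamma>_encircles r by (auto simp: A_def I_def)
    ultimately show ?thesis by simp
  qed
  have sumint: "((\<lambda>w. - (\<Sum>r\<in>I. h r w / (w - A r))) has_contour_integral (- (\<Sum>r\<in>I. 2*pi*\<i> * h r (A r)))) \<gamma>"
    by (intro has_contour_integral_neg has_contour_integral_sum fin cauchy)
  have pointwise: "(\<Prod>i\<in>{1..N}. (complex_of_real (a i) - nu i * z) / (complex_of_real (a i) - z))
                  * f (complex_of_real q * z) / f z / z = - (\<Sum>r\<in>I. h r z / (z - A r))"
    if z: "z \<in> path_image \<gamma>" for z
  proof -
    have nz: "A i - z \<noteq> 0" if "i \<in> I" for i using pathA[OF z that] by auto
    have L: "(\<Sum>r\<in>I. (\<Prod>i\<in>I-{r}. (A i - z)) / (\<Prod>i\<in>I-{r}. (A i - A r))) = 1"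
      by (rule lagrange_one[OF fin Ine injA])
    have "(\<Sum>r\<in>I. wt r / (A r - z)) = 1 / (\<Prod>i\<in>I. (A i - z))"
    proof -
      have P0: "(\<Prod>i\<in>I. (A i - z)) \<noteq> 0" using nz fin by auto
      have "(\<Sum>r\<in>I. wt r / (A r - z)) * (\<Prod>i\<in>I. (A i - z))
            = (\<Sum>r\<in>I. (\<Prod>i\<in>I-{r}. (A i - z)) / (\<Prod>i\<in>I-{r}. (A i - A r)))"
        unfolding sum_distrib_right
      proof (rule sum.cong[OF refl])
        fix r assume r: "r \<in> I"
        have "(\<Prod>i\<in>I. (A i - z)) = (A r - z) * (\<Prod>i\<in>I-{r}. (A i - z))"
          using prod.remove[OF fin r] by simp
        then show "wt r / (A r - z) * (\<Prod>i\<in>I. (A i - z)) = (\<Prod>i\<in>I-{r}. (A i - z)) / (\<Prod>i\<in>I-{r}. (A i - A r))"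
        proof -
          have "wt r / (A r - z) * ((A r - z) * (\<Prod>i\<in>I-{r}. (A i - z))) = wt r * (\<Prod>i\<in>I-{r}. (A i - z))"
            using nz[OF r] by simp
          then show ?thesis unfolding \<open>(\<Prod>i\<in>I. (A i - z)) = (A r - z) * (\<Prod>i\<in>I-{r}. (A i - z))\<close>
            by (simp add: wt_def)
        qed
      qed
      then show ?thesis using L P0 by (simp add: field_simps)
    qed
    have "- (\<Sum>r\<in>I. h r z / (z - A r)) = (\<Prod>i\<in>I. (A i - nu i * z)) * F z * (1 / (\<Prod>i\<in>I. (A i - z)))"
    proof -
      define K where "K = (\<Prod>i\<in>I. (A i - nu i * z)) * F z"
      have e1: "(\<Sum>r\<in>I. h r z / (z - A r)) = K * (\<Sum>r\<in>I. wt r / (z - A r))"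
        unfolding h_def K_def sum_distrib_left by (rule sum.cong[OF refl]) (simp add: mult_ac)
      have e2: "(\<Sum>r\<in>I. wt r / (z - A r)) = - (\<Sum>r\<in>I. wt r / (A r - z))"
        unfolding sum_negf[symmetric] by (rule sum.cong[OF refl]) (metis minus_diff_eq divide_minus_right)
      show ?thesis unfolding e1 e2 \<open>(\<Sum>r\<in>I. wt r / (A r - z)) = 1 / (\<Prod>i\<in>I. (A i - z))\<close> K_def
        by simp
    qed
    also have "\<dots> = (\<Prod>i\<in>I. (A i - nu i * z) / (A i - z)) * F z"
      by (simp add: prod_dividef)
    finally show ?thesis by (simp add: F_def A_def Q_def I_def)
  qed
  have int: "contour_integral \<gamma> (\<lambda>z. (\<Prod>i\<in>{1..N}. (complex_of_real (a i) - nu i * z) / (complex_of_real (a i) - z))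
                  * f (complex_of_real q * z) / f z / z) = - (\<Sum>r\<in>I. 2*pi*\<i> * h r (A r))"
    by (rule contour_integral_unique, rule has_contour_integral_eq[OF sumint]) (use pointwise in auto)
  have lhs: "D_op (complex_of_real q) N (Gprod f N) (\<lambda>i. complex_of_real (a i)) nu
           / Gprod f N (\<lambda>i. complex_of_real (a i)) nu = (\<Sum>r\<in>I. h r (A r))"
  proof -
    have fA: "f (A i) \<noteq> 0" if "i \<in> I" for i using AS[OF that] f_nz by (auto simp: S_def)
    have "D_op Q N (Gprod f N) A nu / Gprod f N A nu = (\<Sum>r\<in>I. h r (A r))"
      unfolding D_op_def qshift_a_def qshift_nu_def sum_divide_distrib I_def[symmetric]
    proof (rule sum.cong[OF refl])
      fix r assume r: "r \<in> I"
      have G1: "Gprod f N A nu = f (A r) * (\<Prod>i\<in>I-{r}. f (A i))"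
        unfolding Gprod_def I_def[symmetric] using prod.remove[OF fin r] by simp
      have G2: "Gprod f N (A(r := Q * A r)) (nu(r := Q * nu r)) = f (Q * A r) * (\<Prod>i\<in>I-{r}. f (A i))"
        unfolding Gprod_def I_def[symmetric] using prod.remove[OF fin r, of "\<lambda>i. f ((A(r := Q * A r)) i)"]
        by (simp add: prod.cong[OF refl, of "I-{r}" "\<lambda>x. f (if x = r then Q * A r else A x)" "\<lambda>i. f (A i)"])
      have P: "(\<Prod>i\<in>I-{r}. f (A i)) \<noteq> 0" using fA fin by auto
      have Pd: "(\<Prod>i\<in>I-{r}. (A i - A r)) \<noteq> 0" using fin injA r unfolding inj_on_def by auto
      have Ar: "A r \<noteq> 0" using AS[OF r] by (simp add: S_def)
      have P2: "(\<Prod>i\<in>I. (A i - nu i * A r)) = (A r - nu r * A r) * (\<Prod>i\<in>I-{r}. (A i - nu i * A r))"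
        using prod.remove[OF fin r] by simp
      show "(1 - nu r) * (\<Prod>i\<in>I - {r}. (A i - nu i * A r) / (A i - A r)) *
            Gprod f N (A(r := Q * A r)) (nu(r := Q * nu r)) / Gprod f N A nu = h r (A r)"
        unfolding G1 G2 h_def wt_def F_def P2 prod_dividef
        using P Ar fA[OF r] Pd by (simp add: field_simps)
    qed
    then show ?thesis by (simp add: A_def Q_def)
  qed
  show ?thesis unfolding lhs int
    by (simp add: sum_distrib_left[symmetric] field_simps)
qed

end
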